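(* Let $q=p^n$ be a prime power and $g\ge 2$. Let $P(t)$ be a Weil polynomial of degree $2g$, written as $P(t)=\prod_{i=1}^g(t^2+x_it+q)$ where $x_i=-(\omega_i+\overline{\omega_i})$ and $\omega_1,\overline{\omega_1},\dots,\omega_g,\overline{\omega_g}$ are its roots, and let $f(t)=\prod_{i=1}^g(t+x_i)$ (a monic polynomial with integer coefficients). Suppose $P(t)\neq (t-\sqrt q)^2(t+\sqrt q)^2$. Then $P(t)$ is irreducible over $\mathbb{Q}$ if and only if $f(t)$ is irreducible over $\mathbb{Q}$.
   Context: A $q$-Weil number is an algebraic integer $\omega$ such that $|\iota(\omega)|=\sqrt q$ for every embedding $\iota:\mathbb{Q}(\omega)\to\mathbb{C}$. A Weil polynomial (of degree $2g$, for the prime power $q$) is a monic polynomial with integer coefficients whose multiset of complex roots can be written as $\{\omega_1,\overline{\omega_1},\dots,\omega_g,\overline{\omega_g}\}$ with each $\omega_i$ a $q$-Weil number. *)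

theory Defs
  imports "HOL-Computational_Algebra.Computational_Algebra" "HOL-Analysis.Analysis"
begin

definition alg_integer :: "complex \<Rightarrow> bool" where
  "alg_integer \<omega> \<longleftrightarrow> (\<exists>p :: int poly. lead_coeff p = 1 \<and> poly (map_poly of_int p) \<omega> = 0)"

text \<open>The subfield Q(omega) of the complex numbers (omega algebraic).\<close>
definition Q_adj :: "complex \<Rightarrow> complex set" where
  "Q_adj \<omega> = {poly (map_poly of_rat p) \<omega> | p :: rat poly. True}"

definition embedding_on :: "complex set \<Rightarrow> (complex \<Rightarrow> complex) \<Rightarrow> bool" where
  "embedding_on K \<iota> \<longleftrightarrow> \<iota> 1 = 1 \<and>
     (\<forall>a\<in>K. \<forall>b\<in>K. \<iota> (a + b) = \<iota> a + \<iota> b \<and> \<iota> (a * b) = \<iota> a * \<iota> b)"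

definition weil_number :: "nat \<Rightarrow> complex \<Rightarrow> bool" where
  "weil_number q \<omega> \<longleftrightarrow> alg_integer \<omega> \<and>
     (\<forall>\<iota>. embedding_on (Q_adj \<omega>) \<iota> \<longrightarrow> norm (\<iota> \<omega>) = sqrt (real q))"

definition weil_poly :: "nat \<Rightarrow> nat \<Rightarrow> int poly \<Rightarrow> bool" where
  "weil_poly q g P \<longleftrightarrow> lead_coeff P = 1 \<and> degree P = 2 * g \<and>
     (\<exists>\<omega> :: nat \<Rightarrow> complex. (\<forall>i<g. weil_number q (\<omega> i)) \<and>
        map_poly of_int P = (\<Prod>i<g. [:- \<omega> i, 1:] * [:- cnj (\<omega> i), 1:]))"

end

theory Submission imports Defs "Berlekamp_Zassenhaus.Finite_Field" "HOL-Computational_Algebra.Field_as_Ring" begin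

definition Tq :: "'a::comm_ring_1 \<Rightarrow> 'a poly \<Rightarrow> 'a poly" where
 "Tq c h = (\<Sum>k\<le>degree h. Polynomial.smult (Polynomial.coeff h k) (Polynomial.monom 1 (degree h - k) * [:c,0,1:]^k))"

interpretation of_rat_poly_hom: map_poly_inj_idom_hom "of_rat :: rat \<Rightarrow> 'a::field_char_0" ..

lemma map_poly_of_rat_sum: "map_poly (of_rat::rat\<Rightarrow>'a::field_char_0) (sum f A) = (\<Sum>x\<in>A. map_poly of_rat (f x))"
  by (induction A rule: infinite_finite_induct) (simp_all add: hom_distribs)

lemma Tq_map_rat: "map_poly (of_rat :: rat \<Rightarrow> 'a::field_char_0) (Tq c h) = Tq (of_rat c) (map_poly of_rat h)"
  unfolding Tq_def by (simp add: hom_distribs map_poly_of_rat_sum)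

lemma Tq_degree_le: "degree (Tq c h) \<le> 2 * degree h"
  unfolding Tq_def
proof (rule degree_sum_le)
  fix k assume "k \<in> {..degree h}"
  hence k: "k \<le> degree h" by simp
  have "degree (Polynomial.smult (Polynomial.coeff h k) (Polynomial.monom 1 (degree h - k) * [:c,0,1:]^k)) \<le> degree (Polynomial.monom (1::'a) (degree h - k) * [:c,0,1:]^k)"
    by (rule Polynomial.degree_smult_le)
  also have "\<dots> \<le> degree (Polynomial.monom (1::'a) (degree h - k)) + degree ([:c,0,1:]^k)" by (rule degree_mult_le)
  also have "\<dots> \<le> (degree h - k) + 2 * k"
    by (intro add_mono degree_monom_le order.trans[OF degree_power_le]) simp
  also have "\<dots> \<le> 2 * degree h" using k by simp
  finally show "degree (Polynomial.smult (Polynomial.coeff h k) (Polynomial.monom 1 (degree h - k) * [:c,0,1:]^k)) \<le> 2 * degree h" .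
qed simp

lemma Tq_eval:
  fixes c x :: "'a::field"
  assumes "x \<noteq> 0"
  shows "poly (Tq c h) x = x ^ degree h * poly h (x + c / x)"
proof -
  have "poly (Tq c h) x = (\<Sum>k\<le>degree h. Polynomial.coeff h k * (x ^ (degree h - k) * (x^2 + c) ^ k))"
    unfolding Tq_def by (simp add: poly_sum poly_monom power2_eq_square algebra_simps)
  also have "\<dots> = (\<Sum>k\<le>degree h. x ^ degree h * (Polynomial.coeff h k * (x + c / x) ^ k))"
  proof (rule sum.cong[OF refl])
    fix k assume "k \<in> {..degree h}"
    hence k: "k \<le> degree h" by simp
    have "x ^ degree h = x ^ (degree h - k) * x ^ k" using k by (simp flip: power_add)
    moreover have "x ^ k * (x + c / x) ^ k = (x^2 + c) ^ k"
      using assms by (simp flip: power_mult_distrib add: field_simps power2_eq_square)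
    ultimately show "Polynomial.coeff h k * (x ^ (degree h - k) * (x^2 + c) ^ k) = x ^ degree h * (Polynomial.coeff h k * (x + c / x) ^ k)"
      by (metis mult.assoc mult.left_commute)
  qed
  also have "\<dots> = x ^ degree h * poly h (x + c / x)"
    by (simp add: poly_altdef sum_distrib_left)
  finally show ?thesis .
qed

lemma poly_eq_nonzero:
  fixes p r :: "'a::field_char_0 poly"
  assumes "\<And>x. x \<noteq> 0 \<Longrightarrow> poly p x = poly r x"
  shows "p = r"
proof (rule ccontr)
  assume "p \<noteq> r"
  hence "p - r \<noteq> 0" by simp
  hence fin: "finite {x. poly (p - r) x = 0}" by (rule poly_roots_finite)
  have "UNIV - {0} \<subseteq> {x. poly (p - r) x = 0}" using assms by auto
  hence "finite (UNIV - {0::'a})" using fin finite_subset by blast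
  hence "finite (UNIV::'a set)" by simp
  moreover have "infinite (UNIV::'a set)" by (rule infinite_UNIV_char_0)
  ultimately show False by blast
qed

lemma Tq_mult:
  fixes h1 h2 :: "'a::field_char_0 poly"
  assumes "h1 \<noteq> 0" "h2 \<noteq> 0"
  shows "Tq c (h1 * h2) = Tq c h1 * Tq c h2"
  by (rule poly_eq_nonzero) (simp add: Tq_eval degree_mult_eq assms power_add)


lemma cnj_of_rat': "cnj (of_rat r) = (of_rat r :: complex)"
  by (cases r) (simp add: of_rat_rat)

lemma map_cnj_of_rat: "map_poly cnj (map_poly (of_rat :: rat \<Rightarrow> complex) p) = map_poly of_rat p"
  by (rule poly_eqI) (simp add: coeff_map_poly cnj_of_rat')

lemma cnj_poly_of_rat: "cnj (poly (map_poly (of_rat :: rat \<Rightarrow> complex) p) z) = poly (map_poly of_rat p) (cnj z)"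
  by (simp add: poly_cnj map_cnj_of_rat)

fun sr :: "rat \<Rightarrow> nat \<Rightarrow> rat poly \<times> rat poly" where
  "sr c 0 = (0, 1)"
| "sr c (Suc k) = ([:0,1:] * fst (sr c k) + snd (sr c k), Polynomial.smult (- c) (fst (sr c k)))"

lemma sr_eval:
  fixes \<beta> u :: complex
  assumes "\<beta>^2 = u * \<beta> - of_rat c"
  shows "\<beta>^k = poly (map_poly of_rat (fst (sr c k))) u * \<beta> + poly (map_poly of_rat (snd (sr c k))) u"
proof (induction k)
  case 0
  then show ?case by simp
next
  case (Suc k)
  let ?S = "poly (map_poly of_rat (fst (sr c k))) u" and ?R = "poly (map_poly of_rat (snd (sr c k))) u"
  have "\<beta>^Suc k = \<beta> * (?S * \<beta> + ?R)" using Suc by simp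
  also have "\<dots> = ?S * \<beta>^2 + ?R * \<beta>" by (simp add: power2_eq_square algebra_simps)
  also have "\<dots> = (u * ?S + ?R) * \<beta> + (- of_rat c) * ?S" unfolding assms by (simp add: algebra_simps)
  finally show ?case by (simp add: hom_distribs of_rat_minus)
qed

definition SA :: "rat \<Rightarrow> rat poly \<Rightarrow> rat poly" where
  "SA c A = (\<Sum>k\<le>degree A. Polynomial.smult (Polynomial.coeff A k) (fst (sr c k)))"
definition RA :: "rat \<Rightarrow> rat poly \<Rightarrow> rat poly" where
  "RA c A = (\<Sum>k\<le>degree A. Polynomial.smult (Polynomial.coeff A k) (snd (sr c k)))"

lemma SRA_eval:
  fixes \<beta> u :: complex
  assumes "\<beta>^2 = u * \<beta> - of_rat c"
  shows "poly (map_poly of_rat A) \<beta> = poly (map_poly of_rat (SA c A)) u * \<beta> + poly (map_poly of_rat (RA c A)) u"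
proof -
  have "poly (map_poly of_rat A) \<beta> = (\<Sum>k\<le>degree A. of_rat (Polynomial.coeff A k) * \<beta>^k)"
    by (simp add: poly_altdef)
  also have "\<dots> = (\<Sum>k\<le>degree A. of_rat (Polynomial.coeff A k) * (poly (map_poly of_rat (fst (sr c k))) u * \<beta> + poly (map_poly of_rat (snd (sr c k))) u))"
    using sr_eval[OF assms] by simp
  also have "\<dots> = poly (map_poly of_rat (SA c A)) u * \<beta> + poly (map_poly of_rat (RA c A)) u"
    unfolding SA_def RA_def
    by (simp add: map_poly_of_rat_sum poly_sum hom_distribs sum_distrib_right sum.distrib algebra_simps)
  finally show ?thesis .
qed

lemma irr_dvd:
  fixes F S :: "rat poly" and a :: complex
  assumes irr: "irreducible F" and F0: "poly (map_poly of_rat F) a = 0" and S0: "poly (map_poly of_rat S) a = 0"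
  shows "F dvd S"
proof (rule ccontr)
  assume nd: "\<not> F dvd S"
  have "gcd F S dvd F" by simp
  hence "is_unit (gcd F S) \<or> F dvd gcd F S" using irr irreducibleD' by blast
  hence u: "is_unit (gcd F S)" using nd by (meson dvd_trans gcd_dvd2)
  obtain x y where xy: "x * F + y * S = gcd F S"
    using bezout_coefficients_fst_snd by blast
  have "poly (map_poly of_rat (gcd F S)) a = 0"
    unfolding xy[symmetric] by (simp add: hom_distribs F0 S0)
  moreover have "gcd F S \<noteq> 0" "degree (gcd F S) = 0" using u is_unit_field_poly by blast+
  ultimately show False
  proof -
    assume z: "poly (map_poly of_rat (gcd F S)) a = 0" and nz: "gcd F S \<noteq> 0" and d: "degree (gcd F S) = 0"
    define c where "c = Polynomial.coeff (gcd F S) 0"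
    have gc: "gcd F S = [:c:]" unfolding c_def using d by (simp add: degree_0_id)
    have "c \<noteq> 0" using nz gc by auto
    thus False using z gc by simp
  qed
qed

lemma sq_dvd_pderiv:
  fixes F p :: "complex poly"
  assumes "p * p dvd F" "poly p x = 0"
  shows "poly (pderiv F) x = 0"
proof -
  obtain R where "F = p * p * R" using assms(1) by (auto elim: dvdE)
  thus ?thesis using assms(2) by (simp add: pderiv_mult)
qed



theorem mainTheorem3:
  fixes p n q g :: nat and P f :: "int poly" and \<omega> :: "nat \<Rightarrow> complex"
  assumes "prime p" and "n \<ge> 1" and "q = p ^ n" and "g \<ge> 2"
    and "weil_poly q g P"
    and "\<forall>i<g. weil_number q (\<omega> i)"
    and "map_poly of_int P = (\<Prod>i<g. [:- \<omega> i, 1:] * [:- cnj (\<omega> i), 1:])"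
    and "map_poly of_int f = (\<Prod>i<g. [:- (\<omega> i + cnj (\<omega> i)), 1:])"
    and "map_poly (of_int :: int \<Rightarrow> complex) P \<noteq>
           [:- complex_of_real (sqrt (real q)), 1:] ^ 2 * [:complex_of_real (sqrt (real q)), 1:] ^ 2"
  shows "irreducible (map_poly (of_int :: int \<Rightarrow> rat) P) \<longleftrightarrow>
         irreducible (map_poly (of_int :: int \<Rightarrow> rat) f)"
proof -
  define a where "a i = \<omega> i + cnj (\<omega> i)" for i
  define qc :: complex where "qc = of_nat q"
  define PQ :: "rat poly" where "PQ = map_poly of_int P"
  define FQ :: "rat poly" where "FQ = map_poly of_int f"
  have PC: "map_poly (of_rat::rat\<Rightarrow>complex) PQ = map_poly of_int P"
    unfolding PQ_def by (subst map_poly_map_poly) (auto simp: o_def)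
  have FC: "map_poly (of_rat::rat\<Rightarrow>complex) FQ = map_poly of_int f"
    unfolding FQ_def by (subst map_poly_map_poly) (auto simp: o_def)
  have wn: "\<omega> i * cnj (\<omega> i) = qc" if "i < g" for i
  proof -
    have "weil_number q (\<omega> i)" using assms(6) that by blast
    moreover have "embedding_on (Q_adj (\<omega> i)) id" by (simp add: embedding_on_def)
    ultimately have "norm (\<omega> i) = sqrt (real q)" unfolding weil_number_def by (metis id_apply)
    hence "\<omega> i * cnj (\<omega> i) = of_real (sqrt (real q) ^ 2)" by (metis complex_norm_square)
    thus ?thesis by (simp add: qc_def)
  qed
  have wn': "cnj (\<omega> i) * \<omega> i = qc" if "i < g" for i using wn[OF that] by (simp add: mult.commute)
  have cnja: "cnj (a i) = a i" for i by (simp add: a_def)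
  have quad1: "(\<omega> i)^2 = a i * \<omega> i - qc" if "i < g" for i
  proof -
    have "a i * \<omega> i - qc = \<omega> i * \<omega> i + (\<omega> i * cnj (\<omega> i) - qc)" by (simp add: a_def algebra_simps)
    thus ?thesis using wn[OF that] by (simp add: power2_eq_square)
  qed
  have quad2: "(cnj (\<omega> i))^2 = a i * cnj (\<omega> i) - qc" if "i < g" for i
  proof -
    have "a i * cnj (\<omega> i) - qc = cnj (\<omega> i) * cnj (\<omega> i) + (\<omega> i * cnj (\<omega> i) - qc)" by (simp add: a_def algebra_simps)
    thus ?thesis using wn[OF that] by (simp add: power2_eq_square)
  qed
  have qcr: "qc = of_rat (of_nat q)" by (simp add: qc_def)
  have Fprod: "map_poly of_int f = (\<Prod>i<g. [:- a i, 1:])" using assms(8) by (simp add: a_def)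
  have lin: "[:- x, 1:] * [:- y, 1:] = [:x*y, -(x+y), 1:]" for x y :: complex
    by (simp add: algebra_simps)
  have Pquad: "map_poly of_int P = (\<Prod>i<g. [:qc, - a i, 1:])"
    unfolding assms(7) by (rule prod.cong) (auto simp: lin wn wn' a_def)
  have degFC: "degree (map_poly (of_int::int\<Rightarrow>complex) f) = g"
    unfolding Fprod by (subst degree_prod_eq_sum_degree) auto
  have degFQ: "degree FQ = g" using degFC FC of_rat_hom.degree_map_poly_hom by metis
  have degP: "degree P = 2 * g" using assms(5) by (simp add: weil_poly_def)
  have degPQ: "degree PQ = 2 * g" using degP by (simp add: PQ_def)
  have PQ0: "PQ \<noteq> 0" using degPQ assms(4) by auto
  have FQ0: "FQ \<noteq> 0" using degFQ assms(4) by auto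
  have FQnu: "\<not> is_unit FQ" using degFQ assms(4) is_unit_field_poly by auto
  have PQnu: "\<not> is_unit PQ" using degPQ assms(4) is_unit_field_poly by auto
  have Froot: "poly (map_poly of_rat FQ) (a j) = 0" if "j < g" for j
    using that unfolding FC Fprod by (auto simp: poly_prod)

  have Tq_eq: "PQ = Tq (of_nat q) FQ"
  proof -
    have "map_poly of_rat (Tq (of_nat q) FQ) = Tq qc (map_poly (of_int::int\<Rightarrow>complex) f)"
      by (simp add: Tq_map_rat FC qc_def)
    also have "\<dots> = map_poly of_int P"
    proof (rule poly_eq_nonzero)
      fix x :: complex assume x: "x \<noteq> 0"
      have "poly (Tq qc (map_poly of_int f)) x = x^g * poly (map_poly of_int f) (x + qc/x)"
        using Tq_eval[OF x, of qc "map_poly of_int f"] degFC by simp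
      also have "\<dots> = x^g * (\<Prod>i<g. poly [:- a i, 1:] (x + qc/x))" by (simp only: Fprod poly_prod)
      also have "\<dots> = (\<Prod>i<g. x * poly [:- a i, 1:] (x + qc/x))" by (simp only: prod.distrib prod_constant card_lessThan)
      also have "\<dots> = (\<Prod>i<g. poly [:qc, - a i, 1:] x)"
        using x by (intro prod.cong refl) (simp add: algebra_simps)
      also have "\<dots> = poly (map_poly of_int P) x" by (simp add: Pquad poly_prod)
      finally show "poly (Tq qc (map_poly of_int f)) x = poly (map_poly of_int P) x" .
    qed
    finally have "map_poly of_rat (Tq (of_nat q) FQ) = (map_poly of_rat PQ :: complex poly)" using PC by simp
    thus ?thesis by simp
  qed
  have dir1: "irreducible FQ" if irrP: "irreducible PQ"
  proof (rule ccontr)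
    assume "\<not> irreducible FQ"
    then obtain F1 F2 where F12: "FQ = F1 * F2" "\<not> is_unit F1" "\<not> is_unit F2"
      using FQ0 FQnu unfolding irreducible_def by blast
    have F10: "F1 \<noteq> 0" "F2 \<noteq> 0" using F12 FQ0 by auto
    have d1: "degree F1 \<ge> 1" "degree F2 \<ge> 1" using F10 F12 is_unit_field_poly by auto
    have PT: "PQ = Tq (of_nat q) F1 * Tq (of_nat q) F2" using Tq_eq F12 F10 Tq_mult by metis
    have T0: "Tq (of_nat q) F1 \<noteq> 0" "Tq (of_nat q) F2 \<noteq> 0" using PT PQ0 by auto
    have "2 * g = degree (Tq (of_nat q) F1) + degree (Tq (of_nat q) F2)"
      using PT T0 degPQ degree_mult_eq by metis
    moreover have "degree FQ = degree F1 + degree F2" using F12 F10 degree_mult_eq by metis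
    moreover note Tq_degree_le[of "of_nat q" F1] Tq_degree_le[of "of_nat q" F2]
    ultimately have "degree (Tq (of_nat q) F1) = 2 * degree F1" "degree (Tq (of_nat q) F2) = 2 * degree F2"
      using degFQ by linarith+
    hence "\<not> is_unit (Tq (of_nat q) F1)" "\<not> is_unit (Tq (of_nat q) F2)"
      using d1 is_unit_field_poly by auto
    thus False using irrP PT unfolding irreducible_def by blast
  qed

  have dir2: "irreducible PQ" if irrF: "irreducible FQ"
  proof -
    have exc: "cnj (\<omega> j) \<noteq> \<omega> j" if j: "j < g" for j
    proof
      assume cj: "cnj (\<omega> j) = \<omega> j"
      define G :: "rat poly" where "G = [:- 4 * of_nat q, 0, 1:]"
      have aj: "a j = 2 * \<omega> j" using cj by (simp add: a_def)
      have "(a j)^2 = 4 * qc" using wn[OF j] cj aj by (simp add: power2_eq_square)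
      hence "poly (map_poly of_rat G) (a j) = 0" by (simp add: G_def qc_def power2_eq_square of_rat_minus of_rat_mult)
      hence dv: "FQ dvd G" using irr_dvd[OF irrF Froot[OF j]] by blast
      have G0: "G \<noteq> 0" and dG: "degree G = 2" by (auto simp: G_def)
      have "g \<le> 2" using dvd_imp_degree[OF dv FQ0 G0] degFQ dG by simp
      hence g2: "g = 2" using assms(4) by simp
      obtain k where k: "G = FQ * k" using dv by (auto elim: dvdE)
      have k0: "k \<noteq> 0" using k G0 by auto
      have "degree G = degree FQ + degree k" unfolding k using k0 FQ0 by (simp add: degree_mult_eq)
      hence dk: "degree k = 0" using dG degFQ g2 by simp
      have LF: "lead_coeff FQ = 1"
      proof -
        have "lead_coeff (map_poly (of_rat::rat\<Rightarrow>complex) FQ) = 1"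
          unfolding FC Fprod by (simp add: lead_coeff_prod)
        thus ?thesis by simp
      qed
      have LG: "lead_coeff G = 1" by (simp add: G_def)
      have lk: "lead_coeff k = 1" using LF LG lead_coeff_mult[of FQ k] k by simp
      have "k = [:Polynomial.coeff k 0:]" using degree_0_id[OF dk] by simp
      hence "k = 1" using lk dk by (simp add: one_pCons)
      hence FG: "FQ = G" using k by simp
      have L2: "{..<g} = {0, 1::nat}" using g2 by auto
      have "[:- a 0, 1:] * [:- a 1, 1:] = map_poly (of_rat::rat\<Rightarrow>complex) G"
        using Fprod FC FG L2 by simp
      hence "[:a 0 * a 1, -(a 0 + a 1), 1:] = [:- 4 * qc, 0, 1:]" by (simp add: lin G_def qc_def of_rat_minus of_rat_mult mult.commute add.commute)
      hence s2: "a 0 * a 1 = - 4 * qc" and cf: "-(a 0 + a 1) = 0" by simp_all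
      have a1: "a 1 = - a 0" by (metis cf add_eq_0_iff neg_equal_0_iff_equal)
      define r :: complex where "r = complex_of_real (sqrt (real q))"
      have r2: "r * r = qc" by (simp add: r_def qc_def flip: of_real_mult)
      have "(a 0 - 2 * r) * (a 0 + 2 * r) = 0" using s2 a1 r2 by (simp add: algebra_simps)
      hence a0: "a 0 = 2 * r \<or> a 0 = - 2 * r" by (auto simp: eq_neg_iff_add_eq_0)
      have E: "[:- r, 1:] ^ 2 * [:r, 1:] ^ 2 = [:qc, - 2 * r, 1:] * [:qc, 2 * r, 1:]"
        using r2 by (simp add: power2_eq_square algebra_simps)
      have "map_poly of_int P = [:qc, - a 0, 1:] * [:qc, a 0, 1:]"
        using Pquad L2 a1 by simp
      also have "\<dots> = [:- r, 1:] ^ 2 * [:r, 1:] ^ 2" using a0 E by (auto simp: algebra_simps)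
      finally show False using assms(9) r_def by simp
    qed
    have ainj: "j = k" if "j < g" "k < g" "a j = a k" for j k
    proof (rule ccontr)
      assume jk: "j \<noteq> k"
      have "(\<Prod>i<g. [:- a i, 1:]) = [:- a j, 1:] * (\<Prod>i\<in>{..<g} - {j}. [:- a i, 1:])"
        using that by (subst prod.remove[of _ j]) auto
      also have "(\<Prod>i\<in>{..<g} - {j}. [:- a i, 1:]) = [:- a k, 1:] * (\<Prod>i\<in>{..<g} - {j} - {k}. [:- a i, 1:])"
        using that jk by (subst prod.remove[of _ k]) auto
      finally have eq: "(\<Prod>i<g. [:- a i, 1:]) = [:- a j, 1:] * ([:- a k, 1:] * (\<Prod>i\<in>{..<g} - {j} - {k}. [:- a i, 1:]))" .
      have "map_poly of_int f = ([:- a j, 1:] * [:- a j, 1:]) * (\<Prod>i\<in>{..<g} - {j} - {k}. [:- a i, 1:])"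
        unfolding Fprod eq using that(3) by (simp only: mult.assoc)
      hence "[:- a j, 1:] * [:- a j, 1:] dvd map_poly of_int f" by (metis dvd_triv_left)
      hence "poly (pderiv (map_poly of_int f)) (a j) = 0" by (rule sq_dvd_pderiv) simp
      hence "poly (map_poly of_rat (pderiv FQ)) (a j) = 0" by (simp add: FC[symmetric] of_rat_hom.map_poly_pderiv)
      hence dv: "FQ dvd pderiv FQ" using irr_dvd[OF irrF Froot[OF that(1)]] by blast
      have "pderiv FQ \<noteq> 0" using degFQ assms(4) by (simp add: pderiv_eq_0_iff)
      hence "degree FQ \<le> degree (pderiv FQ)" using dvd_imp_degree[OF dv FQ0] by simp
      thus False using degFQ assms(4) by (simp add: degree_pderiv)
    qed
    show "irreducible PQ"
    proof (rule ccontr)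
      assume "\<not> irreducible PQ"
      then obtain A B where AB: "PQ = A * B" "\<not> is_unit A" "\<not> is_unit B"
        using PQ0 PQnu unfolding irreducible_def by blast
      have A0: "A \<noteq> 0" "B \<noteq> 0" using AB PQ0 by auto
      have dA: "degree A \<ge> 1" "degree B \<ge> 1" using A0 AB is_unit_field_poly by auto
      have "degree PQ = degree A + degree B" using AB A0 degree_mult_eq by metis
      hence dAlt: "degree A < 2 * g" using dA degPQ by simp
      define AC where "AC = map_poly (of_rat::rat\<Rightarrow>complex) A"
      have dAC: "degree AC = degree A" by (simp add: AC_def)
      have AC0: "AC \<noteq> 0" using A0 by (simp add: AC_def)
      obtain x where x: "poly AC x = 0"
        using fundamental_theorem_of_algebra[of AC] dAC dA constant_degree by (metis not_one_le_zero)
      have "poly (map_poly of_int P) x = 0" unfolding PC[symmetric] AB(1) using x by (simp add: hom_distribs AC_def)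
      hence "\<exists>i\<in>{..<g}. poly ([:- \<omega> i, 1:] * [:- cnj (\<omega> i), 1:]) x = 0"
        unfolding assms(7) poly_prod by (simp only: prod_zero_iff finite_lessThan)
      then obtain i where i0: "i < g" and "poly ([:- \<omega> i, 1:] * [:- cnj (\<omega> i), 1:]) x = 0" by auto
      moreover have pl: "poly [:- w, 1:] y = y - w" for w y :: complex by simp
      ultimately have i: "i < g" "x = \<omega> i \<or> x = cnj (\<omega> i)"
        by (simp_all only: poly_mult pl mult_eq_0_iff right_minus_eq)
      have xi: "poly AC (\<omega> i) = 0"
      proof (cases "x = \<omega> i")
        case True thus ?thesis using x by simp
      next
        case False
        hence "x = cnj (\<omega> i)" using i by simp
        thus ?thesis using x cnj_poly_of_rat[of A x] by (simp add: AC_def)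
      qed
      define S where "S = SA (of_nat q) A"
      define R where "R = RA (of_nat q) A"
      have ev: "poly AC \<beta> = poly (map_poly of_rat S) (a j) * \<beta> + poly (map_poly of_rat R) (a j)"
        if "\<beta>^2 = a j * \<beta> - qc" for \<beta> j
        unfolding AC_def S_def R_def by (rule SRA_eval) (use that qcr in simp)
      have e0: "poly (map_poly of_rat S) (a i) * \<omega> i + poly (map_poly of_rat R) (a i) = 0"
        using ev[OF quad1[OF i(1)]] xi by simp
      show False
      proof (cases "poly (map_poly of_rat S) (a i) = 0")
        case False
        let ?s = "poly (map_poly of_rat S) (a i)" and ?r = "poly (map_poly of_rat R) (a i)"
        have hs: "?s * \<omega> i = - ?r" using e0 by (simp add: eq_neg_iff_add_eq_0)
        have wi: "\<omega> i = - ?r / ?s" using False hs by (metis mult.commute nonzero_mult_div_cancel_right)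
        have "cnj ?s = ?s" "cnj ?r = ?r" using cnj_poly_of_rat cnja by auto
        hence "cnj (\<omega> i) = \<omega> i" using wi by simp
        thus False using exc[OF i(1)] by simp
      next
        case True
        hence "poly (map_poly of_rat R) (a i) = 0" using e0 by simp
        hence dS: "FQ dvd S" and dR: "FQ dvd R" using True irr_dvd[OF irrF Froot[OF i(1)]] by blast+
        have SR0: "poly (map_poly of_rat S) (a j) = 0 \<and> poly (map_poly of_rat R) (a j) = 0" if "j < g" for j
        proof -
          obtain s1 where "S = FQ * s1" using dS by (auto elim: dvdE)
          moreover obtain r1 where "R = FQ * r1" using dR by (auto elim: dvdE)
          ultimately show ?thesis using Froot[OF that] by (simp add: hom_distribs)
        qed
        define Z where "Z = \<omega> ` {..<g} \<union> (\<lambda>j. cnj (\<omega> j)) ` {..<g}"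
        have "Z \<subseteq> {x. poly AC x = 0}"
        proof
          fix z assume "z \<in> Z"
          then obtain j where j: "j < g" "z = \<omega> j \<or> z = cnj (\<omega> j)" unfolding Z_def by auto
          show "z \<in> {x. poly AC x = 0}"
            using j ev[OF quad1[OF j(1)]] ev[OF quad2[OF j(1)]] SR0[OF j(1)] by auto
        qed
        hence "card Z \<le> card {x. poly AC x = 0}"
          using poly_roots_finite[OF AC0] by (rule card_mono[rotated])
        also have "\<dots> \<le> degree AC" using card_poly_roots_bound[OF AC0] .
        finally have cZ: "card Z < 2 * g" using dAC dAlt by simp
        have inj1: "inj_on \<omega> {..<g}"
          by (rule inj_onI) (use ainj in \<open>auto simp: a_def\<close>)
        have inj2: "inj_on (\<lambda>j. cnj (\<omega> j)) {..<g}"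
          by (rule inj_onI) (use ainj in \<open>auto simp: a_def\<close>)
        have disj: "\<omega> ` {..<g} \<inter> (\<lambda>j. cnj (\<omega> j)) ` {..<g} = {}"
        proof (rule ccontr)
          assume "\<omega> ` {..<g} \<inter> (\<lambda>j. cnj (\<omega> j)) ` {..<g} \<noteq> {}"
          then obtain j k where jk: "j < g" "k < g" "\<omega> j = cnj (\<omega> k)" by auto
          hence "a j = a k" by (simp add: a_def add.commute)
          hence "j = k" using ainj jk by blast
          thus False using exc jk by (metis)
        qed
        have "card Z = 2 * g" unfolding Z_def
          by (subst card_Un_disjoint) (auto simp: disj card_image inj1 inj2)
        thus False using cZ by simp
      qed
    qed
  qed
  show ?thesis using dir1 dir2 unfolding PQ_def FQ_def by blast
qed

end
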